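(* Let $B_1$ ($k\times k$) and $B_2$ ($l\times l$) be nonempty real symmetric matrices with all entries positive, and let $A$ be the real symmetric block matrix $$A=\begin{pmatrix}B_1&\mathbf 0_{k\times 1}&\mathbf 0_{k\times l}\\ \mathbf 0_{1\times k}&0&\mathbf 0_{1\times l}\\ \mathbf 0_{l\times k}&\mathbf 0_{l\times 1}&B_2\end{pmatrix}.$$ If $A$ has symmetric tropical rank two, then $A$ has symmetric Kapranov rank two.
   Context: Let $\tilde K$ be the field of Hahn series $\sum_{\alpha\in A}c_\alpha t^\alpha$ ($A\subset\mathbb R$ well-ordered, $c_\alpha\in\mathbb C$); for nonzero $a\in\tilde K$, $\deg(a)$ is the smallest exponent with nonzero coefficient. A symmetric lift of a real symmetric matrix $A$ is a symmetric matrix $\tilde A$ over $\tilde K$ with all entries nonzero and $\deg(\tilde a_{i,j})=A_{i,j}$; the symmetric Kapranov rank of $A$ is the minimum rank of a symmetric lift. For an $r\times r$ submatrix of $A$ with row index set $I$ and column index set $J$, each bijection $\rho:I\to J$ gives a monomial $\prod_{i\in I}X_{i,\rho(i)}$ in commuting variables subject to $X_{i,j}=X_{j,i}$, with value $\sum_{i\in I}A_{i,\rho(i)}$; the submatrix is symmetrically tropically singular if the minimum value is attained by at least two distinct monomials. The symmetric tropical rank of $A$ is the largest $r$ such that $A$ has an $r\times r$ submatrix that is not symmetrically tropically singular. *)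

theory Defs
  imports Complex_Main "HOL-Combinatorics.Permutations" "HOL-Library.Multiset"
begin

text \<open>A Hahn series sum c_a t^a is represented by its coefficient function
  real => complex; it is a Hahn series iff its support is well-ordered.\<close>

type_synonym hahn = "real \<Rightarrow> complex"

definition hsupp :: "hahn \<Rightarrow> real set" where
  "hsupp f = {a. f a \<noteq> 0}"

definition is_hahn :: "hahn \<Rightarrow> bool" where
  "is_hahn f \<longleftrightarrow> (\<forall>T. T \<subseteq> hsupp f \<longrightarrow> T \<noteq> {} \<longrightarrow> (\<exists>m\<in>T. \<forall>t\<in>T. m \<le> t))"

definition hzero :: hahn where "hzero = (\<lambda>_. 0)"

definition hone :: hahn where "hone = (\<lambda>a. if a = 0 then 1 else 0)"

definition hneg :: "hahn \<Rightarrow> hahn" where "hneg f = (\<lambda>a. - f a)"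

text \<open>Finite sums (pointwise) and the Cauchy product (the sum defining each
  coefficient is finite for Hahn series).\<close>

definition hsum :: "('i \<Rightarrow> hahn) \<Rightarrow> 'i set \<Rightarrow> hahn" where
  "hsum F S = (\<lambda>a. \<Sum>s\<in>S. F s a)"

definition hmul :: "hahn \<Rightarrow> hahn \<Rightarrow> hahn" where
  "hmul f g = (\<lambda>c. \<Sum>p\<in>{(a, b). f a \<noteq> 0 \<and> g b \<noteq> 0 \<and> a + b = c}. f (fst p) * g (snd p))"

fun hprod_list :: "hahn list \<Rightarrow> hahn" where
  "hprod_list [] = hone"
| "hprod_list (x # xs) = hmul x (hprod_list xs)"

definition hdeg :: "hahn \<Rightarrow> real" where
  "hdeg f = (LEAST a. f a \<noteq> 0)"

text \<open>Matrices are functions nat => nat => _, used on indices below n.\<close>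

definition hdet :: "nat \<Rightarrow> (nat \<Rightarrow> nat \<Rightarrow> hahn) \<Rightarrow> hahn" where
  "hdet r N = hsum (\<lambda>\<sigma>. (if evenperm \<sigma> then id else hneg)
                        (hprod_list (map (\<lambda>p. N p (\<sigma> p)) [0..<r])))
                  {\<sigma>. \<sigma> permutes {..<r}}"

definition hminor :: "(nat \<Rightarrow> nat \<Rightarrow> hahn) \<Rightarrow> nat set \<Rightarrow> nat set \<Rightarrow> hahn" where
  "hminor M I J = hdet (card I)
     (\<lambda>p q. M (sorted_list_of_set I ! p) (sorted_list_of_set J ! q))"

definition hrank :: "nat \<Rightarrow> (nat \<Rightarrow> nat \<Rightarrow> hahn) \<Rightarrow> nat" where
  "hrank n M = Max {r. \<exists>I J. I \<subseteq> {..<n} \<and> J \<subseteq> {..<n} \<and> card I = r \<and> card J = r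
                      \<and> hminor M I J \<noteq> hzero}"

definition sym_lift :: "nat \<Rightarrow> (nat \<Rightarrow> nat \<Rightarrow> real) \<Rightarrow> (nat \<Rightarrow> nat \<Rightarrow> hahn) \<Rightarrow> bool" where
  "sym_lift n A M \<longleftrightarrow>
     (\<forall>i<n. \<forall>j<n. is_hahn (M i j) \<and> M i j \<noteq> hzero \<and> M i j = M j i
                 \<and> hdeg (M i j) = A i j)"

definition sym_kapranov_rank :: "nat \<Rightarrow> (nat \<Rightarrow> nat \<Rightarrow> real) \<Rightarrow> nat" where
  "sym_kapranov_rank n A = (LEAST r. \<exists>M. sym_lift n A M \<and> hrank n M = r)"

text \<open>The monomial of a bijection rho : I -> J in commuting variables with
  X_ij = X_ji: the multiset of unordered index pairs {i, rho i}.\<close>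

definition sym_monomial :: "nat set \<Rightarrow> (nat \<Rightarrow> nat) \<Rightarrow> nat set multiset" where
  "sym_monomial I \<rho> = image_mset (\<lambda>i. {i, \<rho> i}) (mset_set I)"

definition trop_value :: "(nat \<Rightarrow> nat \<Rightarrow> real) \<Rightarrow> nat set \<Rightarrow> (nat \<Rightarrow> nat) \<Rightarrow> real" where
  "trop_value A I \<rho> = (\<Sum>i\<in>I. A i (\<rho> i))"

definition sym_trop_singular :: "(nat \<Rightarrow> nat \<Rightarrow> real) \<Rightarrow> nat set \<Rightarrow> nat set \<Rightarrow> bool" where
  "sym_trop_singular A I J \<longleftrightarrow>
     (let m = Min {trop_value A I \<rho> | \<rho>. bij_betw \<rho> I J} in
      \<exists>\<rho>1 \<rho>2. bij_betw \<rho>1 I J \<and> bij_betw \<rho>2 I J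
        \<and> trop_value A I \<rho>1 = m \<and> trop_value A I \<rho>2 = m
        \<and> sym_monomial I \<rho>1 \<noteq> sym_monomial I \<rho>2)"

definition sym_tropical_rank :: "nat \<Rightarrow> (nat \<Rightarrow> nat \<Rightarrow> real) \<Rightarrow> nat" where
  "sym_tropical_rank n A = Max {r. \<exists>I J. I \<subseteq> {..<n} \<and> J \<subseteq> {..<n} \<and> card I = r \<and> card J = r
                                 \<and> \<not> sym_trop_singular A I J}"

text \<open>diag(B1, 0, B2) of size k + 1 + l; B1 indexed by {..<k}, B2 by {..<l}.\<close>

definition block_matrix :: "nat \<Rightarrow> (nat \<Rightarrow> nat \<Rightarrow> real) \<Rightarrow> (nat \<Rightarrow> nat \<Rightarrow> real) \<Rightarrow> nat \<Rightarrow> nat \<Rightarrow> real" where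
  "block_matrix k B1 B2 i j =
     (if i < k \<and> j < k then B1 i j
      else if k < i \<and> k < j then B2 (i - k - 1) (j - k - 1)
      else 0)"

end

theory Submission
  imports Defs "Jordan_Normal_Form.Determinant" "HOL-Library.Poly_Mapping" "HOL-Library.Nat_Bijection"
begin

type_synonym R = "real \<Rightarrow>\<^sub>0 complex"
abbreviation lk :: "('a \<Rightarrow>\<^sub>0 'b::zero) \<Rightarrow> 'a \<Rightarrow> 'b" where "lk \<equiv> poly_mapping.lookup"

lemma hmul_hone: "hmul f hone = f"
proof
  fix c
  have "{(a, b). f a \<noteq> 0 \<and> hone b \<noteq> 0 \<and> a + b = c} = (if f c \<noteq> 0 then {(c,0)} else {})"
    by (auto simp: hone_def split: if_splits)
  then show "hmul f hone c = f c" by (simp add: hmul_def hone_def)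
qed

lemma lookup_mult_hmul: "lk (p * q) = hmul (lk p) (lk (q::R))"
proof
  fix c
  let ?f = "lk p" and ?g = "lk q"
  have "lk (p * q) c = prod_fun ?f ?g c" unfolding prod_fun_def by (rule lookup_mult)
  also have "\<dots> = (\<Sum>(a, b). ?f a * ?g b when c = a + b)"
    by (rule prod_fun_unfold_prod) simp_all
  also have "\<dots> = (\<Sum>x\<in>{x. (case x of (a, b) \<Rightarrow> ?f a * ?g b when c = a + b) \<noteq> 0}.
                     (case x of (a, b) \<Rightarrow> ?f a * ?g b when c = a + b))"
    by (rule Sum_any.expand_set)
  also have "{x. (case x of (a, b) \<Rightarrow> ?f a * ?g b when c = a + b) \<noteq> 0}
             = {(a, b). ?f a \<noteq> 0 \<and> ?g b \<noteq> 0 \<and> a + b = c}"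
    by (auto simp: when_def split: if_splits)
  also have "(\<Sum>x\<in>{(a, b). ?f a \<noteq> 0 \<and> ?g b \<noteq> 0 \<and> a + b = c}.
                     (case x of (a, b) \<Rightarrow> ?f a * ?g b when c = a + b))
           = (\<Sum>x\<in>{(a, b). ?f a \<noteq> 0 \<and> ?g b \<noteq> 0 \<and> a + b = c}. ?f (fst x) * ?g (snd x))"
    by (rule sum.cong) (auto simp: when_def)
  finally show "lk (p * q) c = hmul ?f ?g c" by (simp add: hmul_def)
qed

lemma hone_lookup: "hone = lk (1::R)"
  by (rule ext) (simp add: hone_def lookup_one when_def)

lemma hprod_list_lookup: "hprod_list (map lk xs) = lk (prod_list (xs::R list))"
  by (induction xs) (simp_all add: hone_lookup lookup_mult_hmul)

lemma hsum_lookup: "hsum (\<lambda>s. lk (F s)) S = lk (sum (F::_\<Rightarrow>R) S)"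
  by (auto simp: hsum_def lookup_sum)

lemma hneg_lookup: "hneg (lk (p::R)) = lk (- p)"
  by (rule ext) (simp add: hneg_def)

lemma hdet_lookup:
  "hdet r (\<lambda>p q. lk (N p q)) = lk (det (mat r r (\<lambda>(p,q). (N p q :: R))))"
proof -
  have "hdet r (\<lambda>p q. lk (N p q)) =
        hsum (\<lambda>\<sigma>. lk (signof \<sigma> * (\<Prod>i = 0..<r. N i (\<sigma> i)))) {\<sigma>. \<sigma> permutes {..<r}}"
    unfolding hdet_def
  proof (rule arg_cong2[where f=hsum], rule ext)
    fix \<sigma> :: "nat \<Rightarrow> nat"
    have "hprod_list (map (\<lambda>p. lk (N p (\<sigma> p))) [0..<r])
        = lk (\<Prod>i = 0..<r. N i (\<sigma> i))"
      using hprod_list_lookup[of "map (\<lambda>p. N p (\<sigma> p)) [0..<r]"]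
      using prod.distinct_set_conv_list[OF distinct_upt, of "\<lambda>p. N p (\<sigma> p)" 0 r]
      by (simp add: o_def)
    then show "(if evenperm \<sigma> then id else hneg) (hprod_list (map (\<lambda>p. lk (N p (\<sigma> p))) [0..<r]))
        = lk (signof \<sigma> * (\<Prod>i = 0..<r. N i (\<sigma> i)))"
      by (simp add: sign_def hneg_lookup)
  qed simp
  also have "\<dots> = lk (det (mat r r (\<lambda>(p,q). (N p q :: R))))"
    by (simp add: hsum_lookup det_def lessThan_atLeast0)
  finally show ?thesis .
qed

lemma is_hahn_lookup: "is_hahn (lk (p::R))"
proof -
  have fin: "finite (hsupp (lk p))" unfolding hsupp_def by (rule finite_lookup)
  show ?thesis unfolding is_hahn_def
  proof (intro allI impI)
    fix T assume "T \<subseteq> hsupp (lk p)" "T \<noteq> {}"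
    then have "finite T" using fin finite_subset by blast
    then show "\<exists>m\<in>T. \<forall>t\<in>T. m \<le> t" using \<open>T \<noteq> {}\<close>
      by (intro bexI[of _ "Min T"]) auto
  qed
qed


lemma rank2_det_zero:
  fixes U V :: "nat \<Rightarrow> R"
  assumes r: "3 \<le> r"
  shows "det (mat r r (\<lambda>(p,q). U (f p) * V (g q) + V (f p) * U (g q))) = 0"
proof -
  define X where "X = mat r r (\<lambda>(p,m). if m = 0 then U (f p) else if m = 1 then V (f p) else 0)"
  define Y where "Y = mat r r (\<lambda>(m,q). if m = 0 then V (g q) else if m = 1 then U (g q) else 0)"
  have XY: "mat r r (\<lambda>(p,q). U (f p) * V (g q) + V (f p) * U (g q)) = X * Y"
  proof (rule eq_matI)
    fix p q assume pq: "p < dim_row (X * Y)" "q < dim_col (X * Y)"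
    then have p: "p < r" and q: "q < r" by (auto simp: X_def Y_def)
    have "(X * Y) $$ (p, q) = (\<Sum>m\<in>{0..<r}. X $$ (p, m) * Y $$ (m, q))"
      using p q by (simp add: X_def Y_def scalar_prod_def)
    also have "\<dots> = (\<Sum>m\<in>{0..<2}. X $$ (p, m) * Y $$ (m, q))"
      using r p q by (intro sum.mono_neutral_right) (auto simp: X_def Y_def)
    also have "\<dots> = U (f p) * V (g q) + V (f p) * U (g q)"
      using r p q by (simp add: X_def Y_def numeral_2_eq_2)
    finally show "mat r r (\<lambda>(p,q). U (f p) * V (g q) + V (f p) * U (g q)) $$ (p, q) = (X * Y) $$ (p, q)"
      using p q by simp
  qed (auto simp: X_def Y_def)
  have detY: "det Y = 0"
  proof -
    have h: "\<And>\<sigma>. \<sigma> permutes {0..<r} \<Longrightarrow> (\<Prod>i = 0..<r. Y $$ (i, \<sigma> i)) = 0"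
    proof -
      fix \<sigma> assume "\<sigma> permutes {0..<r}"
      then have "\<sigma> 2 < r" using r by (simp add: permutes_in_image)
      then show "(\<Prod>i = 0..<r. Y $$ (i, \<sigma> i)) = 0"
        using r by (intro prod_zero bexI[of _ 2]) (auto simp: Y_def)
    qed
    have "Y \<in> carrier_mat r r" by (simp add: Y_def)
    then show ?thesis unfolding det_def'[OF \<open>Y \<in> carrier_mat r r\<close>]
      by (intro sum.neutral ballI) (simp only: mem_Collect_eq h mult_zero_right)
  qed
  have "det (X * Y) = det X * det Y" by (rule det_mult[of _ r]) (simp_all add: X_def Y_def)
  then show ?thesis unfolding XY detY by simp
qed

lemma hdeg_eqI: "f d \<noteq> 0 \<Longrightarrow> (\<forall>a<d. f a = 0) \<Longrightarrow> hdeg f = d"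
  unfolding hdeg_def by (rule Least_equality) (auto simp: not_less[symmetric])

lemma hahn_deg:
  assumes "is_hahn f" "f \<noteq> hzero"
  shows "f (hdeg f) \<noteq> 0 \<and> (\<forall>a<hdeg f. f a = 0)"
proof -
  have ne: "hsupp f \<noteq> {}" using assms(2) by (auto simp: hsupp_def hzero_def)
  then obtain m where m: "m \<in> hsupp f" "\<forall>t\<in>hsupp f. m \<le> t"
    using assms(1) unfolding is_hahn_def by blast
  have "\<forall>a<m. f a = 0" using m(2) by (force simp: hsupp_def)
  moreover have "f m \<noteq> 0" using m(1) by (simp add: hsupp_def)
  ultimately show ?thesis using hdeg_eqI[of f m] by auto
qed

lemma hmul_low:
  assumes "\<forall>a<d1. f a = 0" "\<forall>b<d2. g b = 0" "c < d1 + d2"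
  shows "hmul f g c = 0"
proof -
  have e: "{(a, b). f a \<noteq> 0 \<and> g b \<noteq> 0 \<and> a + b = c} = {}"
    using assms by (auto simp: not_less[symmetric]) (smt (verit))
  show ?thesis unfolding hmul_def e by simp
qed

lemma hmul_at:
  assumes "\<forall>a<d1. f a = 0" "\<forall>b<d2. g b = 0"
  shows "hmul f g (d1 + d2) = f d1 * g d2"
proof (cases "f d1 \<noteq> 0 \<and> g d2 \<noteq> 0")
  case True
  have e: "{(a, b). f a \<noteq> 0 \<and> g b \<noteq> 0 \<and> a + b = d1 + d2} = {(d1, d2)}"
    using assms True by (auto simp: not_less[symmetric]) (smt (verit))+
  show ?thesis unfolding hmul_def e by simp
next
  case False
  have e: "{(a, b). f a \<noteq> 0 \<and> g b \<noteq> 0 \<and> a + b = d1 + d2} = {}"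
    using assms False by (auto simp: not_less[symmetric]) (smt (verit))+
  show ?thesis unfolding hmul_def e using False by auto
qed

lemma perms2: "{\<sigma>. \<sigma> permutes {..<2::nat}} = {id, Transposition.transpose 0 1}"
proof (intro Set.set_eqI iffI)
  fix \<sigma> :: "nat \<Rightarrow> nat" assume "\<sigma> \<in> {\<sigma>. \<sigma> permutes {..<2::nat}}"
  then have p: "\<sigma> permutes {..<2}" by simp
  have out: "\<And>x. x \<ge> 2 \<Longrightarrow> \<sigma> x = x" using p by (auto simp: permutes_def)
  have s0: "\<sigma> 0 < 2" "\<sigma> 1 < 2" using permutes_in_image[OF p, of 0] permutes_in_image[OF p, of 1] by auto
  have inj: "\<sigma> 0 \<noteq> \<sigma> 1" using p by (metis permutes_inj injD zero_neq_one)
  show "\<sigma> \<in> {id, Transposition.transpose 0 1}"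
  proof (cases "\<sigma> 0 = 0")
    case True
    then have "\<sigma> 1 = 1" using s0 inj by linarith
    then have "\<sigma> = id" using True out
      by (intro ext) (metis One_nat_def id_apply less_2_cases not_less)
    then show ?thesis by simp
  next
    case False
    then have "\<sigma> 0 = 1" "\<sigma> 1 = 0" using s0 inj by linarith+
    then have "\<sigma> = Transposition.transpose 0 1" using out
      by (intro ext) (auto simp: Transposition.transpose_def)
    then show ?thesis by simp
  qed
next
  fix \<sigma> assume "\<sigma> \<in> {id, Transposition.transpose (0::nat) 1}"
  then show "\<sigma> \<in> {\<sigma>. \<sigma> permutes {..<2::nat}}"
    by (auto intro: permutes_id permutes_swap_id)
qed

lemma hdet2: "hdet 2 N = (\<lambda>c. hmul (N 0 0) (N 1 1) c - hmul (N 0 1) (N 1 0) c)"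
proof -
  have ne: "id \<noteq> Transposition.transpose (0::nat) (Suc 0)"
    by (metis id_apply transpose_apply_first zero_neq_one One_nat_def)
  show ?thesis
    unfolding hdet_def perms2
    by (rule ext) (simp add: hsum_def ne evenperm_swap hmul_hone hneg_def numeral_2_eq_2 upt_rec transpose_apply_first transpose_apply_second)
qed


definition Nb :: "nat set \<Rightarrow> (nat \<Rightarrow> nat \<Rightarrow> real) \<Rightarrow> real \<Rightarrow> nat \<Rightarrow> nat set" where
  "Nb D B v i = {q\<in>D. v < B i q}"

definition Sb :: "nat set \<Rightarrow> (nat \<Rightarrow> nat \<Rightarrow> real) \<Rightarrow> real \<Rightarrow> nat \<Rightarrow> nat set" where
  "Sb D B v i = {p\<in>D. Nb D B v p = Nb D B v i}"

definition sgn_b :: "nat set \<Rightarrow> (nat \<Rightarrow> nat \<Rightarrow> real) \<Rightarrow> real \<Rightarrow> nat \<Rightarrow> real" where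
  "sgn_b D B v i = (if set_encode (Sb D B v i) < set_encode (Nb D B v i) then 1 else -1)"

definition mag_b :: "nat set \<Rightarrow> (nat \<Rightarrow> nat \<Rightarrow> real) \<Rightarrow> real \<Rightarrow> nat \<Rightarrow> real" where
  "mag_b D B v i = 1 + real (set_encode (Sb D B v i \<union> Nb D B v i))"

definition cc :: "nat set \<Rightarrow> (nat \<Rightarrow> nat \<Rightarrow> real) \<Rightarrow> real \<Rightarrow> nat \<Rightarrow> complex" where
  "cc D B v i = (if v < B i i then 0 else complex_of_real (sgn_b D B v i * mag_b D B v i))"

locale blk =
  fixes D :: "nat set" and B :: "nat \<Rightarrow> nat \<Rightarrow> real"
  assumes finD: "finite D"
    and symB: "\<And>i j. i \<in> D \<Longrightarrow> j \<in> D \<Longrightarrow> B i j = B j i"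
    and posB: "\<And>i j. i \<in> D \<Longrightarrow> j \<in> D \<Longrightarrow> 0 < B i j"
    and R4: "\<And>a b c d. a \<in> D \<Longrightarrow> b \<in> D \<Longrightarrow> c \<in> D \<Longrightarrow> d \<in> D \<Longrightarrow> a \<noteq> c \<Longrightarrow> b \<noteq> d
               \<Longrightarrow> \<not> (B a d < B a b \<and> B a d < B c b \<and> B a d < B c d)"
    and R3: "\<And>i j. i \<in> D \<Longrightarrow> j \<in> D \<Longrightarrow> i \<noteq> j \<Longrightarrow> \<not> (B i j < B i i \<and> B i j < B j j)"
begin

lemma pathR:
  assumes "a \<in> D" "b \<in> D" "c \<in> D" "d \<in> D" "v < B a b" "v < B b c" "v < B c d"
  shows "v < B a d"
proof (cases "a = c \<or> b = d")
  case True then show ?thesis using assms by auto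
next
  case False
  show ?thesis
  proof (rule ccontr)
    assume "\<not> v < B a d"
    then have "B a d < B a b \<and> B a d < B c b \<and> B a d < B c d"
      using assms symB[of b c] by auto
    then show False using R4[of a b c d] assms False by auto
  qed
qed

lemma NS:
  assumes i: "i \<in> D" and j: "j \<in> D" and ij: "v < B i j"
  shows "Nb D B v j = Sb D B v i"
proof (rule Set.set_eqI, rule iffI)
  fix p assume "p \<in> Nb D B v j"
  then have p: "p \<in> D" "v < B j p" by (auto simp: Nb_def)
  have "Nb D B v p = Nb D B v i"
  proof (rule Set.set_eqI, rule iffI)
    fix q assume "q \<in> Nb D B v p"
    then have q: "q \<in> D" "v < B p q" by (auto simp: Nb_def)
    have "v < B i q" using pathR[of i j p q v] i j p q ij by auto
    then show "q \<in> Nb D B v i" using q by (auto simp: Nb_def)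
  next
    fix q assume "q \<in> Nb D B v i"
    then have q: "q \<in> D" "v < B i q" by (auto simp: Nb_def)
    have "v < B p q" using pathR[of p j i q v] i j p q ij symB[of p j] symB[of j i] by auto
    then show "q \<in> Nb D B v p" using q by (auto simp: Nb_def)
  qed
  then show "p \<in> Sb D B v i" using p by (auto simp: Sb_def)
next
  fix p assume "p \<in> Sb D B v i"
  then have p: "p \<in> D" "Nb D B v p = Nb D B v i" by (auto simp: Sb_def)
  then have "j \<in> Nb D B v p" using j ij by (auto simp: Nb_def)
  then show "p \<in> Nb D B v j" using p symB[of p j] j by (auto simp: Nb_def)
qed

lemma fin_NS: "finite (Nb D B v i)" "finite (Sb D B v i)"
  using finD by (auto simp: Nb_def Sb_def)

lemma S_ne_N: "i \<in> D \<Longrightarrow> \<not> v < B i i \<Longrightarrow> Sb D B v i \<noteq> Nb D B v i"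
  by (auto simp: Sb_def Nb_def)

lemma enc_ne: "i \<in> D \<Longrightarrow> \<not> v < B i i \<Longrightarrow> set_encode (Sb D B v i) \<noteq> set_encode (Nb D B v i)"
  using S_ne_N fin_NS set_encode_eq by metis

lemma K1:
  assumes i: "i \<in> D" and j: "j \<in> D" and ij: "v < B i j"
  shows "cc D B v i + cc D B v j = 0"
proof (cases "v < B i i")
  case True
  then have "v < B j j" using pathR[of j i i j v] i j ij symB[of i j] by auto
  then show ?thesis using True by (simp add: cc_def)
next
  case False
  then have F2: "\<not> v < B j j" using pathR[of i j j i v] i j ij symB[of i j] by auto
  have e1: "Nb D B v j = Sb D B v i" using NS[OF i j ij] .
  have e2: "Nb D B v i = Sb D B v j" using NS[OF j i] ij symB[of i j] i j by auto
  have ne: "set_encode (Sb D B v i) \<noteq> set_encode (Nb D B v i)" using enc_ne[OF i False] .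
  have "mag_b D B v j = mag_b D B v i" unfolding mag_b_def e1 e2 by (simp add: Un_commute)
  moreover have "sgn_b D B v j = - sgn_b D B v i"
    unfolding sgn_b_def e1 e2[symmetric] using ne by auto
  ultimately show ?thesis using False F2 by (simp add: cc_def)
qed

lemma K2:
  assumes i: "i \<in> D" and j: "j \<in> D" and ij: "B i j = v"
  shows "cc D B v i + cc D B v j \<noteq> 0"
proof -
  have mag: "\<And>x. mag_b D B v x \<ge> 1" by (simp add: mag_b_def)
  have sg: "\<And>x. sgn_b D B v x = 1 \<or> sgn_b D B v x = -1" by (simp add: sgn_b_def)
  have nz: "\<And>x. sgn_b D B v x * mag_b D B v x \<noteq> 0"
    using mag sg by (metis mult_eq_0_iff not_one_le_zero zero_neq_neg_one one_neq_zero)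
  show ?thesis
  proof (cases "v < B i i")
    case Ti: True
    show ?thesis
    proof (cases "v < B j j")
      case True
      then show ?thesis using Ti R3[of i j] i j ij by (cases "i = j") auto
    next
      case False
      then show ?thesis using Ti nz[of j] by (simp add: cc_def)
    qed
  next
    case Fi: False
    show ?thesis
    proof (cases "v < B j j")
      case True
      then show ?thesis using Fi nz[of i] by (simp add: cc_def)
    next
      case Fj: False
      show ?thesis
      proof
        assume "cc D B v i + cc D B v j = 0"
        moreover have "cc D B v i = complex_of_real (sgn_b D B v i * mag_b D B v i)"
          using Fi by (simp add: cc_def del: of_real_mult)
        moreover have "cc D B v j = complex_of_real (sgn_b D B v j * mag_b D B v j)"
          using Fj by (simp add: cc_def del: of_real_mult)
        ultimately have "complex_of_real (sgn_b D B v i * mag_b D B v i + sgn_b D B v j * mag_b D B v j) = 0"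
          by (simp only: of_real_add)
        then have "sgn_b D B v i * mag_b D B v i + sgn_b D B v j * mag_b D B v j = 0"
          by (simp only: of_real_eq_0_iff)
        then have sm: "sgn_b D B v j = - sgn_b D B v i" "mag_b D B v i = mag_b D B v j"
          using sg[of i] sg[of j] mag[of i] mag[of j] by auto
        have "Sb D B v i \<union> Nb D B v i = Sb D B v j \<union> Nb D B v j"
          using sm(2) fin_NS set_encode_eq by (simp add: mag_b_def)
        moreover have "j \<in> Sb D B v j" using j by (simp add: Sb_def)
        ultimately have "j \<in> Sb D B v i \<or> j \<in> Nb D B v i" by auto
        moreover have "j \<notin> Nb D B v i" using ij by (simp add: Nb_def)
        ultimately have "j \<in> Sb D B v i" by blast
        then have "Nb D B v j = Nb D B v i" by (simp add: Sb_def)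
        then have "Sb D B v j = Sb D B v i" by (simp add: Sb_def)
        then have "sgn_b D B v j = sgn_b D B v i"
          using \<open>Nb D B v j = Nb D B v i\<close> by (simp add: sgn_b_def)
        then show False using sm(1) sg[of i] by auto
      qed
    qed
  qed
qed

definition Vb where "Vb = (\<lambda>(x, y). B x y) ` (D \<times> D)"
definition wb :: "nat \<Rightarrow> R" where
  "wb i = Abs_poly_mapping (\<lambda>a. if a \<in> Vb then cc D B a i else 0)"

lemma lk_wb: "lk (wb i) = (\<lambda>a. if a \<in> Vb then cc D B a i else 0)"
proof -
  have "finite Vb" using finD by (simp add: Vb_def)
  then have "finite {a. (if a \<in> Vb then cc D B a i else 0) \<noteq> 0}"
    by (rule finite_subset[rotated]) auto
  then show ?thesis unfolding wb_def by simp
qed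

lemma wb_pos: "i \<in> D \<Longrightarrow> a \<le> 0 \<Longrightarrow> lk (wb i) a = 0"
  unfolding lk_wb Vb_def using posB by (auto, fastforce)

lemma wb_deg:
  assumes i: "i \<in> D" and j: "j \<in> D"
  shows "lk (wb i + wb j) (B i j) \<noteq> 0 \<and> (\<forall>a<B i j. lk (wb i + wb j) a = 0)"
proof -
  have "B i j \<in> Vb" using i j by (force simp: Vb_def)
  then have "lk (wb i + wb j) (B i j) \<noteq> 0" using K2[OF i j refl] by (simp add: lookup_add lk_wb)
  moreover have "\<forall>a<B i j. lk (wb i + wb j) a = 0"
    using K1[OF i j] by (simp add: lookup_add lk_wb)
  ultimately show ?thesis by blast
qed

end


lemma trop_value_cong: "(\<And>x. x \<in> I \<Longrightarrow> \<rho> x = \<rho>' x) \<Longrightarrow> trop_value A I \<rho> = trop_value A I \<rho>'"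
  by (simp add: trop_value_def)

lemma sym_monomial_cong: "finite I \<Longrightarrow> (\<And>x. x \<in> I \<Longrightarrow> \<rho> x = \<rho>' x) \<Longrightarrow> sym_monomial I \<rho> = sym_monomial I \<rho>'"
  unfolding sym_monomial_def by (rule image_mset_cong) simp

lemma fin_vals:
  assumes "finite I" "finite J"
  shows "finite {trop_value A I \<rho> |\<rho>. bij_betw \<rho> I J}"
proof (rule finite_subset)
  show "{trop_value A I \<rho> |\<rho>. bij_betw \<rho> I J} \<subseteq> (trop_value A I) ` (I \<rightarrow>\<^sub>E J)"
  proof
    fix x assume "x \<in> {trop_value A I \<rho> |\<rho>. bij_betw \<rho> I J}"
    then obtain \<rho> where r: "bij_betw \<rho> I J" "x = trop_value A I \<rho>" by blast
    have "restrict \<rho> I \<in> I \<rightarrow>\<^sub>E J" using r(1) by (auto simp: bij_betw_def)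
    moreover have "x = trop_value A I (restrict \<rho> I)" using r(2) by (auto intro: trop_value_cong)
    ultimately show "x \<in> (trop_value A I) ` (I \<rightarrow>\<^sub>E J)" by blast
  qed
  show "finite ((trop_value A I) ` (I \<rightarrow>\<^sub>E J))" using assms by (simp add: finite_PiE)
qed

lemma not_singular_unique:
  assumes fin: "finite I" "finite J"
    and r0: "bij_betw \<rho>0 I J"
    and uniq: "\<And>\<rho>. bij_betw \<rho> I J \<Longrightarrow> trop_value A I \<rho> \<ge> trop_value A I \<rho>0
                 \<and> (trop_value A I \<rho> = trop_value A I \<rho>0 \<longrightarrow> sym_monomial I \<rho> = sym_monomial I \<rho>0)"
  shows "\<not> sym_trop_singular A I J"
proof -
  have m: "Min {trop_value A I \<rho> |\<rho>. bij_betw \<rho> I J} = trop_value A I \<rho>0"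
    by (rule Min_eqI) (use fin_vals[OF fin] r0 uniq in auto)
  show ?thesis unfolding sym_trop_singular_def Let_def m using uniq by metis
qed

lemma bij3:
  assumes "bij_betw \<rho> {a, c, k} J" "a \<noteq> c" "a \<noteq> k" "c \<noteq> k"
  shows "\<rho> a \<in> J" "\<rho> c \<in> J" "\<rho> k \<in> J" "\<rho> a \<noteq> \<rho> c" "\<rho> a \<noteq> \<rho> k" "\<rho> c \<noteq> \<rho> k"
  using assms by (auto simp: bij_betw_def inj_on_def)

lemma tv3: "a \<noteq> c \<Longrightarrow> a \<noteq> k \<Longrightarrow> c \<noteq> k \<Longrightarrow>
   trop_value A {a, c, k} \<rho> = A a (\<rho> a) + A c (\<rho> c) + A k (\<rho> k)"
  by (simp add: trop_value_def)

lemma trop_L4: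
  fixes A :: "nat \<Rightarrow> nat \<Rightarrow> real"
  assumes d: "a \<noteq> c" "b \<noteq> d" "a \<noteq> k" "c \<noteq> k" "b \<noteq> k" "d \<noteq> k"
    and z: "A a k = 0" "A c k = 0" "A k b = 0" "A k d = 0" "A k k = 0"
    and p: "0 < A a d"
    and lt: "A a d < A a b" "A a d < A c b" "A a d < A c d"
  shows "\<not> sym_trop_singular A {a, c, k} {b, d, k}"
proof -
  define \<rho>0 where "\<rho>0 = (\<lambda>x. if x = a then d else if x = c then k else b)"
  have r0: "bij_betw \<rho>0 {a, c, k} {b, d, k}"
    unfolding bij_betw_def inj_on_def \<rho>0_def using d by auto
  have v0: "trop_value A {a, c, k} \<rho>0 = A a d"
    using d z by (simp add: tv3 \<rho>0_def)
  show ?thesis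
  proof (rule not_singular_unique[OF _ _ r0])
    fix \<rho> assume r: "bij_betw \<rho> {a, c, k} {b, d, k}"
    note b = bij3[OF r d(1) d(3) d(4)]
    have "trop_value A {a, c, k} \<rho> \<ge> A a d \<and>
      (trop_value A {a, c, k} \<rho> = A a d \<longrightarrow> (\<rho> a = d \<and> \<rho> c = k \<and> \<rho> k = b))"
      unfolding tv3[OF d(1) d(3) d(4)] using b d z p lt by auto
    moreover have "(\<rho> a = d \<and> \<rho> c = k \<and> \<rho> k = b) \<Longrightarrow> sym_monomial {a, c, k} \<rho> = sym_monomial {a, c, k} \<rho>0"
      by (rule sym_monomial_cong) (auto simp: \<rho>0_def d)
    ultimately show "trop_value A {a, c, k} \<rho> \<ge> trop_value A {a, c, k} \<rho>0 \<and>
      (trop_value A {a, c, k} \<rho> = trop_value A {a, c, k} \<rho>0 \<longrightarrow>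
         sym_monomial {a, c, k} \<rho> = sym_monomial {a, c, k} \<rho>0)" unfolding v0 by blast
  qed auto
qed

lemma trop_L3:
  fixes A :: "nat \<Rightarrow> nat \<Rightarrow> real"
  assumes d: "i \<noteq> j" "i \<noteq> k" "j \<noteq> k"
    and z: "A i k = 0" "A k i = 0" "A j k = 0" "A k j = 0" "A k k = 0"
    and s: "A i j = A j i" and p: "0 < A i j"
    and lt: "A i j < A i i" "A i j < A j j"
  shows "\<not> sym_trop_singular A {i, j, k} {i, j, k}"
proof -
  define \<rho>0 where "\<rho>0 = (\<lambda>x. if x = i then j else if x = j then k else i)"
  define \<rho>1 where "\<rho>1 = (\<lambda>x. if x = i then k else if x = j then i else j)"
  have r0: "bij_betw \<rho>0 {i, j, k} {i, j, k}"
    unfolding bij_betw_def inj_on_def \<rho>0_def using d by auto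
  have v0: "trop_value A {i, j, k} \<rho>0 = A i j"
    using d z by (simp add: tv3 \<rho>0_def)
  have m01: "sym_monomial {i, j, k} \<rho>1 = sym_monomial {i, j, k} \<rho>0"
    using d by (simp add: sym_monomial_def \<rho>0_def \<rho>1_def insert_commute)
  show ?thesis
  proof (rule not_singular_unique[OF _ _ r0])
    fix \<rho> assume r: "bij_betw \<rho> {i, j, k} {i, j, k}"
    note b = bij3[OF r d(1) d(2) d(3)]
    have "trop_value A {i, j, k} \<rho> \<ge> A i j \<and>
      (trop_value A {i, j, k} \<rho> = A i j \<longrightarrow> ((\<rho> i = j \<and> \<rho> j = k \<and> \<rho> k = i) \<or> (\<rho> i = k \<and> \<rho> j = i \<and> \<rho> k = j)))"
      unfolding tv3[OF d(1) d(2) d(3)] using b d z p lt s by auto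
    moreover have "(\<rho> i = j \<and> \<rho> j = k \<and> \<rho> k = i) \<Longrightarrow> sym_monomial {i, j, k} \<rho> = sym_monomial {i, j, k} \<rho>0"
      by (rule sym_monomial_cong) (auto simp: \<rho>0_def d)
    moreover have "(\<rho> i = k \<and> \<rho> j = i \<and> \<rho> k = j) \<Longrightarrow> sym_monomial {i, j, k} \<rho> = sym_monomial {i, j, k} \<rho>1"
      by (rule sym_monomial_cong) (auto simp: \<rho>1_def d)
    ultimately show "trop_value A {i, j, k} \<rho> \<ge> trop_value A {i, j, k} \<rho>0 \<and>
      (trop_value A {i, j, k} \<rho> = trop_value A {i, j, k} \<rho>0 \<longrightarrow>
         sym_monomial {i, j, k} \<rho> = sym_monomial {i, j, k} \<rho>0)" unfolding v0 m01[symmetric] using m01 by metis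
  qed auto
qed

lemma trop_rank_ge3:
  assumes "I \<subseteq> {..<n}" "J \<subseteq> {..<n}" "card I = 3" "card J = 3" "\<not> sym_trop_singular A I J"
  shows "3 \<le> sym_tropical_rank n A"
proof -
  have fin: "finite {r. \<exists>I J. I \<subseteq> {..<n} \<and> J \<subseteq> {..<n} \<and> card I = r \<and> card J = r
                                 \<and> \<not> sym_trop_singular A I J}"
    by (rule finite_subset[of _ "{..n}"]) (auto dest: card_mono[rotated, OF _ finite_lessThan])
  show ?thesis unfolding sym_tropical_rank_def
    by (rule Max_ge[OF fin]) (use assms in blast)
qed


definition half :: R where "half = Poly_Mapping.single 0 (1/2)"

lemma lk_half: "lk half a = (if a = 0 then 1/2 else 0)"
  by (simp add: half_def lookup_single when_def)

lemma lk_one: "lk (1::R) a = (if a = 0 then 1 else 0)"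
  by (simp add: lookup_one when_def)

definition nneg :: "R \<Rightarrow> bool" where "nneg p \<longleftrightarrow> (\<forall>a<0. lk p a = 0)"
definition posi :: "R \<Rightarrow> bool" where "posi p \<longleftrightarrow> (\<forall>a\<le>0. lk p a = 0)"

lemma posi_nneg: "posi p \<Longrightarrow> nneg p" by (simp add: posi_def nneg_def)
lemma nneg_one: "nneg 1" by (simp add: nneg_def lk_one)
lemma nneg_half: "nneg half" by (simp add: nneg_def lk_half)
lemma nneg_add: "nneg p \<Longrightarrow> nneg q \<Longrightarrow> nneg (p + q)" by (simp add: nneg_def lookup_add)

lemma nneg_mul: "nneg p \<Longrightarrow> nneg q \<Longrightarrow> nneg (p * q)"
  unfolding nneg_def lookup_mult_hmul using hmul_low[of 0 "lk p" 0 "lk q"] by auto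

lemma lk_mul0: "nneg p \<Longrightarrow> nneg q \<Longrightarrow> lk (p * q) 0 = lk p 0 * lk q 0"
  unfolding nneg_def lookup_mult_hmul using hmul_at[of 0 "lk p" 0 "lk q"] by auto

definition Uf :: "nat \<Rightarrow> (nat \<Rightarrow> R) \<Rightarrow> nat \<Rightarrow> R" where
  "Uf k w2 i = (if i \<le> k then 1 else w2 (i - k - 1))"
definition Vf :: "nat \<Rightarrow> (nat \<Rightarrow> R) \<Rightarrow> nat \<Rightarrow> R" where
  "Vf k w1 i = (if i < k then w1 i else if i = k then half else 1)"
definition Lf :: "nat \<Rightarrow> (nat \<Rightarrow> R) \<Rightarrow> (nat \<Rightarrow> R) \<Rightarrow> nat \<Rightarrow> nat \<Rightarrow> R" where
  "Lf k w1 w2 i j = Uf k w2 i * Vf k w1 j + Vf k w1 i * Uf k w2 j"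

lemma Lf_sym: "Lf k w1 w2 i j = Lf k w1 w2 j i"
  by (simp add: Lf_def mult.commute add.commute)

lemma Lf_deg:
  fixes w1 w2 :: "nat \<Rightarrow> R"
  assumes p1: "\<And>i. i < k \<Longrightarrow> posi (w1 i)" and p2: "\<And>i. i < l \<Longrightarrow> posi (w2 i)"
    and d1: "\<And>i j. i < k \<Longrightarrow> j < k \<Longrightarrow> lk (w1 i + w1 j) (B1 i j) \<noteq> 0 \<and> (\<forall>a<B1 i j. lk (w1 i + w1 j) a = 0)"
    and d2: "\<And>i j. i < l \<Longrightarrow> j < l \<Longrightarrow> lk (w2 i + w2 j) (B2 i j) \<noteq> 0 \<and> (\<forall>a<B2 i j. lk (w2 i + w2 j) a = 0)"
    and i: "i < k + 1 + l" and j: "j < k + 1 + l"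
  shows "lk (Lf k w1 w2 i j) (block_matrix k B1 B2 i j) \<noteq> 0 \<and>
         (\<forall>a<block_matrix k B1 B2 i j. lk (Lf k w1 w2 i j) a = 0)"
proof -
  have nU: "\<And>x. x < k + 1 + l \<Longrightarrow> nneg (Uf k w2 x)"
    using p2 by (auto simp: Uf_def nneg_one intro!: posi_nneg)
  have nV: "\<And>x. x < k + 1 + l \<Longrightarrow> nneg (Vf k w1 x)"
    using p1 by (auto simp: Vf_def nneg_one nneg_half intro!: posi_nneg)
  have U0: "\<And>x. x < k + 1 + l \<Longrightarrow> lk (Uf k w2 x) 0 = (if x \<le> k then 1 else 0)"
    using p2 by (auto simp: Uf_def lk_one posi_def)
  have V0: "\<And>x. x < k + 1 + l \<Longrightarrow> lk (Vf k w1 x) 0 = (if x < k then 0 else if x = k then 1/2 else 1)"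
    using p1 by (auto simp: Vf_def lk_one lk_half posi_def)
  show ?thesis
  proof (cases "i < k \<and> j < k")
    case True
    then have "Lf k w1 w2 i j = w1 i + w1 j" by (simp add: Lf_def Uf_def Vf_def add.commute)
    then show ?thesis using d1 True by (simp add: block_matrix_def)
  next
    case F1: False
    show ?thesis
    proof (cases "k < i \<and> k < j")
      case True
      then have "Lf k w1 w2 i j = w2 (i - k - 1) + w2 (j - k - 1)" by (simp add: Lf_def Uf_def Vf_def)
      moreover have "i - k - 1 < l" "j - k - 1 < l" using True i j by auto
      ultimately show ?thesis using d2[of "i - k - 1" "j - k - 1"] True by (simp add: block_matrix_def)
    next
      case F2: False
      have bm: "block_matrix k B1 B2 i j = 0" using F1 F2 unfolding block_matrix_def by auto
      have nn: "nneg (Lf k w1 w2 i j)"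
        unfolding Lf_def using nU nV i j by (intro nneg_add nneg_mul) auto
      have "lk (Lf k w1 w2 i j) 0 = lk (Uf k w2 i) 0 * lk (Vf k w1 j) 0 + lk (Vf k w1 i) 0 * lk (Uf k w2 j) 0"
        unfolding Lf_def lookup_add using nU nV i j by (simp add: lk_mul0)
      also have "\<dots> \<noteq> 0" using F1 F2 i j by (simp add: U0 V0) arith
      finally show ?thesis using nn bm by (simp add: nneg_def)
    qed
  qed
qed

lemma pdeg_lift:
  assumes "lk p d \<noteq> 0" "\<forall>a<d. lk p a = 0"
  shows "is_hahn (lk p) \<and> lk p \<noteq> hzero \<and> hdeg (lk p) = d"
  using assms is_hahn_lookup hdeg_eqI[of "lk p" d] by (auto simp: hzero_def)

lemma lower_rank:
  assumes L: "sym_lift n A M" and k: "0 < k" "k < n"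
    and a: "0 < A 0 0" "A 0 k = 0" "A k k = 0"
  shows "2 \<le> hrank n M" and "2 \<in> {r. \<exists>I J. I \<subseteq> {..<n} \<and> J \<subseteq> {..<n} \<and> card I = r \<and> card J = r
                      \<and> hminor M I J \<noteq> hzero}"
proof -
  have sl: "sorted_list_of_set {0, k} = [0, k]" using k by simp
  have c: "card {0, k} = 2" using k by simp
  have hm: "hminor M {0, k} {0, k} = hdet 2 (\<lambda>p q. M ([0, k] ! p) ([0, k] ! q))"
    unfolding hminor_def sl c ..
  have e00: "is_hahn (M 0 0) \<and> M 0 0 \<noteq> hzero \<and> hdeg (M 0 0) = A 0 0"
    and e0k: "is_hahn (M 0 k) \<and> M 0 k \<noteq> hzero \<and> hdeg (M 0 k) = A 0 k \<and> M 0 k = M k 0"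
    and ekk: "is_hahn (M k k) \<and> M k k \<noteq> hzero \<and> hdeg (M k k) = A k k"
    using L k unfolding sym_lift_def by auto
  have z00: "\<forall>b<A 0 0. M 0 0 b = 0" using hahn_deg[of "M 0 0"] e00 by auto
  have zkk: "\<forall>b<0. M k k b = 0" using hahn_deg[of "M k k"] ekk a by auto
  have z0k: "\<forall>b<0. M 0 k b = 0" "M 0 k 0 \<noteq> 0" using hahn_deg[of "M 0 k"] e0k a by auto
  have "hmul (M 0 0) (M k k) 0 = 0" using hmul_low[OF z00 zkk] a by simp
  moreover have "hmul (M 0 k) (M k 0) 0 = M 0 k 0 * M 0 k 0"
    using hmul_at[OF z0k(1) z0k(1)] e0k by simp
  ultimately have "hminor M {0, k} {0, k} 0 \<noteq> 0"
    unfolding hm hdet2 using z0k(2) by simp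
  then have ne: "hminor M {0, k} {0, k} \<noteq> hzero" by (auto simp: hzero_def)
  have fin: "finite {r. \<exists>I J. I \<subseteq> {..<n} \<and> J \<subseteq> {..<n} \<and> card I = r \<and> card J = r
                      \<and> hminor M I J \<noteq> hzero}"
    by (rule finite_subset[of _ "{..n}"]) (auto dest: card_mono[rotated, OF _ finite_lessThan])
  show "2 \<in> {r. \<exists>I J. I \<subseteq> {..<n} \<and> J \<subseteq> {..<n} \<and> card I = r \<and> card J = r
                      \<and> hminor M I J \<noteq> hzero}"
    using ne c k by auto
  then show "2 \<le> hrank n M" unfolding hrank_def
    by (rule Max_ge[OF fin])
qed

lemma upper_rank:
  fixes U V :: "nat \<Rightarrow> R"
  assumes "I \<subseteq> {..<n}" "J \<subseteq> {..<n}" "card I = r" "card J = r" "3 \<le> r"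
  shows "hminor (\<lambda>i j. lk (U i * V j + V i * U j)) I J = hzero"
proof -
  have "hminor (\<lambda>i j. lk (U i * V j + V i * U j)) I J
     = lk (det (mat r r (\<lambda>(p,q). U (sorted_list_of_set I ! p) * V (sorted_list_of_set J ! q)
                     + V (sorted_list_of_set I ! p) * U (sorted_list_of_set J ! q))))"
    unfolding hminor_def hdet_lookup assms(3) ..
  also have "\<dots> = lk 0" by (subst rank2_det_zero[OF assms(5)]) simp
  finally show ?thesis by (simp add: hzero_def fun_eq_iff lookup_zero)
qed


theorem lemma2:
  fixes k l :: nat and B1 B2 :: "nat \<Rightarrow> nat \<Rightarrow> real"
  assumes "k \<ge> 1" and "l \<ge> 1"
    and "\<forall>i<k. \<forall>j<k. B1 i j = B1 j i \<and> B1 i j > 0"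
    and "\<forall>i<l. \<forall>j<l. B2 i j = B2 j i \<and> B2 i j > 0"
    and "sym_tropical_rank (k + 1 + l) (block_matrix k B1 B2) = 2"
  shows "sym_kapranov_rank (k + 1 + l) (block_matrix k B1 B2) = 2"
proof -
  define n where "n = k + 1 + l"
  define A where "A = block_matrix k B1 B2"
  have rk: "sym_tropical_rank n A = 2" using assms(5) by (simp add: n_def A_def)
  have sing: "\<And>I J. I \<subseteq> {..<n} \<Longrightarrow> J \<subseteq> {..<n} \<Longrightarrow> card I = 3 \<Longrightarrow> card J = 3 \<Longrightarrow> sym_trop_singular A I J"
  proof (rule ccontr)
    fix I J assume "I \<subseteq> {..<n}" "J \<subseteq> {..<n}" "card I = 3" "card J = 3" "\<not> sym_trop_singular A I J"
    then have "3 \<le> sym_tropical_rank n A" by (rule trop_rank_ge3)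
    then show False using rk by simp
  qed
  have Ak: "\<And>x. A x k = 0" "\<And>x. A k x = 0" by (auto simp: A_def block_matrix_def)
  have A1: "\<And>i j. i < k \<Longrightarrow> j < k \<Longrightarrow> A i j = B1 i j" by (simp add: A_def block_matrix_def)
  have A2: "\<And>i j. A (k + 1 + i) (k + 1 + j) = B2 i j" by (simp add: A_def block_matrix_def)
  have A2s: "\<And>i j. A (Suc (k + i)) (Suc (k + j)) = B2 i j" by (simp add: A_def block_matrix_def)
  have blk1: "blk {..<k} B1"
  proof
    fix a b c d assume in4: "a \<in> {..<k}" "b \<in> {..<k}" "c \<in> {..<k}" "d \<in> {..<k}" and ne: "a \<noteq> c" "b \<noteq> d"
    show "\<not> (B1 a d < B1 a b \<and> B1 a d < B1 c b \<and> B1 a d < B1 c d)"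
    proof
      assume lt: "B1 a d < B1 a b \<and> B1 a d < B1 c b \<and> B1 a d < B1 c d"
      have "\<not> sym_trop_singular A {a, c, k} {b, d, k}"
        using in4 ne lt assms(3) by (intro trop_L4) (auto simp: Ak A1)
      moreover have "sym_trop_singular A {a, c, k} {b, d, k}"
        using in4 ne by (intro sing) (auto simp: n_def)
      ultimately show False by blast
    qed
  next
    fix i j assume in2: "i \<in> {..<k}" "j \<in> {..<k}" and ne: "i \<noteq> j"
    show "\<not> (B1 i j < B1 i i \<and> B1 i j < B1 j j)"
    proof
      assume lt: "B1 i j < B1 i i \<and> B1 i j < B1 j j"
      have "\<not> sym_trop_singular A {i, j, k} {i, j, k}"
        using in2 ne lt assms(3) by (intro trop_L3) (auto simp: Ak A1)
      moreover have "sym_trop_singular A {i, j, k} {i, j, k}"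
        using in2 ne by (intro sing) (auto simp: n_def)
      ultimately show False by blast
    qed
  qed (use assms(3) in auto)
  have blk2: "blk {..<l} B2"
  proof
    fix a b c d assume in4: "a \<in> {..<l}" "b \<in> {..<l}" "c \<in> {..<l}" "d \<in> {..<l}" and ne: "a \<noteq> c" "b \<noteq> d"
    show "\<not> (B2 a d < B2 a b \<and> B2 a d < B2 c b \<and> B2 a d < B2 c d)"
    proof
      assume lt: "B2 a d < B2 a b \<and> B2 a d < B2 c b \<and> B2 a d < B2 c d"
      have "\<not> sym_trop_singular A {k + 1 + a, k + 1 + c, k} {k + 1 + b, k + 1 + d, k}"
        using in4 ne lt assms(4) by (intro trop_L4) (auto simp: Ak A2 A2s)
      moreover have "sym_trop_singular A {k + 1 + a, k + 1 + c, k} {k + 1 + b, k + 1 + d, k}"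
        using in4 ne by (intro sing) (auto simp: n_def)
      ultimately show False by blast
    qed
  next
    fix i j assume in2: "i \<in> {..<l}" "j \<in> {..<l}" and ne: "i \<noteq> j"
    show "\<not> (B2 i j < B2 i i \<and> B2 i j < B2 j j)"
    proof
      assume lt: "B2 i j < B2 i i \<and> B2 i j < B2 j j"
      have "\<not> sym_trop_singular A {k + 1 + i, k + 1 + j, k} {k + 1 + i, k + 1 + j, k}"
        using in2 ne lt assms(4) by (intro trop_L3) (auto simp: Ak A2 A2s)
      moreover have "sym_trop_singular A {k + 1 + i, k + 1 + j, k} {k + 1 + i, k + 1 + j, k}"
        using in2 ne by (intro sing) (auto simp: n_def)
      ultimately show False by blast
    qed
  qed (use assms(4) in auto)
  define w1 where "w1 = blk.wb {..<k} B1"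
  define w2 where "w2 = blk.wb {..<l} B2"
  have p1: "\<And>i. i < k \<Longrightarrow> posi (w1 i)" unfolding w1_def posi_def using blk.wb_pos[OF blk1] by auto
  have p2: "\<And>i. i < l \<Longrightarrow> posi (w2 i)" unfolding w2_def posi_def using blk.wb_pos[OF blk2] by auto
  have d1: "\<And>i j. i < k \<Longrightarrow> j < k \<Longrightarrow> lk (w1 i + w1 j) (B1 i j) \<noteq> 0 \<and> (\<forall>a<B1 i j. lk (w1 i + w1 j) a = 0)"
    unfolding w1_def using blk.wb_deg[OF blk1] by auto
  have d2: "\<And>i j. i < l \<Longrightarrow> j < l \<Longrightarrow> lk (w2 i + w2 j) (B2 i j) \<noteq> 0 \<and> (\<forall>a<B2 i j. lk (w2 i + w2 j) a = 0)"
    unfolding w2_def using blk.wb_deg[OF blk2] by auto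
  define M where "M = (\<lambda>i j. lk (Lf k w1 w2 i j))"
  have lift: "sym_lift n A M"
    unfolding sym_lift_def
  proof (intro allI impI)
    fix i j assume i: "i < n" and j: "j < n"
    have "lk (Lf k w1 w2 i j) (A i j) \<noteq> 0 \<and> (\<forall>a<A i j. lk (Lf k w1 w2 i j) a = 0)"
      unfolding A_def by (rule Lf_deg[OF p1 p2 d1 d2]) (use i j n_def in auto)
    then show "is_hahn (M i j) \<and> M i j \<noteq> hzero \<and> M i j = M j i \<and> hdeg (M i j) = A i j"
      using pdeg_lift[of "Lf k w1 w2 i j" "A i j"] Lf_sym[of k w1 w2 i j] by (simp add: M_def)
  qed
  have A00: "0 < A 0 0" using A1[of 0 0] assms(1,3) by auto
  have low: "\<And>M'. sym_lift n A M' \<Longrightarrow> 2 \<le> hrank n M'"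
  proof -
    fix M' assume L: "sym_lift n A M'"
    have "0 < k" "k < n" using assms(1) n_def by auto
    then show "2 \<le> hrank n M'" using lower_rank(1)[of n A M' k] L A00 Ak by simp
  qed
  have hr: "hrank n M = 2"
  proof -
    have fin: "finite {r. \<exists>I J. I \<subseteq> {..<n} \<and> J \<subseteq> {..<n} \<and> card I = r \<and> card J = r
                      \<and> hminor M I J \<noteq> hzero}"
      by (rule finite_subset[of _ "{..n}"]) (auto dest: card_mono[rotated, OF _ finite_lessThan])
    have le: "hrank n M \<le> 2" unfolding hrank_def
    proof (rule Max.boundedI[OF fin])
      show "{r. \<exists>I J. I \<subseteq> {..<n} \<and> J \<subseteq> {..<n} \<and> card I = r \<and> card J = r
                      \<and> hminor M I J \<noteq> hzero} \<noteq> {}"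
        using lower_rank(2)[of n A M k] lift A00 Ak assms(1) n_def by auto
    next
      fix r assume "r \<in> {r. \<exists>I J. I \<subseteq> {..<n} \<and> J \<subseteq> {..<n} \<and> card I = r \<and> card J = r
                      \<and> hminor M I J \<noteq> hzero}"
      then obtain I J where IJ: "I \<subseteq> {..<n}" "J \<subseteq> {..<n}" "card I = r" "card J = r" "hminor M I J \<noteq> hzero"
        by blast
      show "r \<le> 2"
      proof (rule ccontr)
        assume "\<not> r \<le> 2"
        then have "3 \<le> r" by simp
        from upper_rank[OF IJ(1-4) this, of "Uf k w2" "Vf k w1"] IJ(5) show False
          by (simp add: M_def Lf_def)
      qed
    qed
    then show ?thesis using low[OF lift] by simp
  qed
  have "sym_kapranov_rank n A = 2"
    unfolding sym_kapranov_rank_def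
  proof (rule Least_equality)
    show "\<exists>M. sym_lift n A M \<and> hrank n M = 2" using lift hr by blast
  next
    fix y assume "\<exists>M. sym_lift n A M \<and> hrank n M = y"
    then show "2 \<le> y" using low by blast
  qed
  then show ?thesis by (simp add: n_def A_def)
qed

end
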